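(* Let $L_1,L_2$ be disjoint first-order languages without function symbols, each containing at least one constant symbol, let $T_1,T_2$ be an $L_1$-theory and an $L_2$-theory, and let $T_{\mathrm{sim}}$ be the theory of simple products of $T_1$ and $T_2$. Let $\mathcal N$ be a monster model of $T_{\mathrm{sim}}$, identified with the standard simple product of a model $\mathcal M_1=(M_1,\ldots)$ of $T_1$ and a model $\mathcal M_2=(M_2,\ldots)$ of $T_2$, so that $N=M_1\times M_2$, and let $\pi_k:N\to M_k$ be the projections. Let $A\subseteq N$ be small and $A_k=\pi_k(A)$. Let $(a_i)_{i\in I}$ and $(b_i)_{i\in I}$ be sequences of elements of $M_1$ and $M_2$ respectively, indexed by a linearly ordered set $I$. Then the sequence $((a_i,b_i))_{i\in I}$ is $A$-indiscernible in $\mathcal N$ if and only if $(a_i)_{i\in I}$ is $A_1$-indiscernible in $\mathcal M_1$ and $(b_i)_{i\in I}$ is $A_2$-indiscernible in $\mathcal M_2$.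
   Context: Language of simple product $L_{\mathrm{sim}}$: constant symbols $C_{(c_1,c_2)}$ for each pair of constants $c_1\in L_1$, $c_2\in L_2$; predicate symbols: those of $L_1$, those of $L_2$, and binary $\sim_1,\sim_2$. $T_\times$ states: $\sim_1,\sim_2$ are equivalence relations; $\forall x\forall y((x\sim_1y)\wedge(x\sim_2y)\to x=y)$; $\forall x\forall y\exists z((x\sim_1z)\wedge(y\sim_2z))$. Standard conversion $\widetilde\phi$ of an $L_k$-formula $\phi$: rewrite atomic formulas with constants as $\exists\bar y(R(\bar y)\wedge\bigwedge t_i=y_i)$; equality of variables $x=y$ becomes $x\sim_k y$; equality with a constant $c\in L_k$ uses $\sim_k$ and $C_{(c,d)}$ (if $k=1$) or $C_{(d,c)}$ (if $k=2$), $d$ a fixed constant of the other language; $R\in L_k$ atomic formulas unchanged; commutes with Boolean connectives and $\exists$. $T_{\mathrm{sim}}$: $T_\times$, all $\widetilde\sigma$ for $\sigma\in T_1\cup T_2$, and for each $k$ and $R\in L_k$, $\forall\bar x\forall\bar y((\bar x\sim_k\bar y)\to(R(\bar x)\leftrightarrow R(\bar y)))$. Standard simple product of $\mathcal M_1,\mathcal M_2$: universe $M_1\times M_2$, $C_{(c_1,c_2)}\mapsto(c_1^{\mathcal M_1},c_2^{\mathcal M_2})$, $x\sim_k y$ iff $\pi_k(x)=\pi_k(y)$, and $R\in L_k$ holds of $\bar c$ iff $\mathcal M_k\models R(\pi_k(\bar c))$. A sequence $(a_i)_{i\in I}$ in a structure is $A$-indiscernible if for every $n$, all $i_1<\cdots<i_n$,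 $j_1<\cdots<j_n$ in $I$ and every formula $\phi(x_1,\ldots,x_n)$ with parameters from $A$, $\phi(a_{i_1},\ldots,a_{i_n})\leftrightarrow\phi(a_{j_1},\ldots,a_{j_n})$ holds. *)

theory Defs
  imports Main
begin

text \<open>Terms: variables, constant symbols of the language, and parameters
  (elements of the structure, used to express formulas with parameters).\<close>
datatype ('c, 'a) trm = Var nat | Cst 'c | Par 'a

datatype ('r, 'c, 'a) fm =
    Eq "('c, 'a) trm" "('c, 'a) trm"
  | Rel 'r "('c, 'a) trm list"
  | Neg "('r, 'c, 'a) fm"
  | Conj "('r, 'c, 'a) fm" "('r, 'c, 'a) fm"
  | Ex nat "('r, 'c, 'a) fm"

text \<open>A structure: the universe is the whole type 'a.\<close>
record ('r, 'c, 'a) struct =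
  cst :: "'c \<Rightarrow> 'a"
  rel :: "'r \<Rightarrow> 'a list \<Rightarrow> bool"

fun eval_trm :: "('r, 'c, 'a) struct \<Rightarrow> (nat \<Rightarrow> 'a) \<Rightarrow> ('c, 'a) trm \<Rightarrow> 'a" where
  "eval_trm S e (Var n) = e n"
| "eval_trm S e (Cst c) = cst S c"
| "eval_trm S e (Par a) = a"

fun sat :: "('r, 'c, 'a) struct \<Rightarrow> (nat \<Rightarrow> 'a) \<Rightarrow> ('r, 'c, 'a) fm \<Rightarrow> bool" where
  "sat S e (Eq t u) = (eval_trm S e t = eval_trm S e u)"
| "sat S e (Rel r ts) = rel S r (map (eval_trm S e) ts)"
| "sat S e (Neg \<phi>) = (\<not> sat S e \<phi>)"
| "sat S e (Conj \<phi> \<psi>) = (sat S e \<phi> \<and> sat S e \<psi>)"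
| "sat S e (Ex x \<phi>) = (\<exists>v. sat S (e(x := v)) \<phi>)"

fun wf :: "('r \<Rightarrow> nat) \<Rightarrow> ('r, 'c, 'a) fm \<Rightarrow> bool" where
  "wf ar (Eq t u) = True"
| "wf ar (Rel r ts) = (length ts = ar r)"
| "wf ar (Neg \<phi>) = wf ar \<phi>"
| "wf ar (Conj \<phi> \<psi>) = (wf ar \<phi> \<and> wf ar \<psi>)"
| "wf ar (Ex x \<phi>) = wf ar \<phi>"

fun fv_trm :: "('c, 'a) trm \<Rightarrow> nat set" where
  "fv_trm (Var n) = {n}"
| "fv_trm (Cst c) = {}"
| "fv_trm (Par a) = {}"

fun fv :: "('r, 'c, 'a) fm \<Rightarrow> nat set" where
  "fv (Eq t u) = fv_trm t \<union> fv_trm u"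
| "fv (Rel r ts) = (\<Union>t\<in>set ts. fv_trm t)"
| "fv (Neg \<phi>) = fv \<phi>"
| "fv (Conj \<phi> \<psi>) = fv \<phi> \<union> fv \<psi>"
| "fv (Ex x \<phi>) = fv \<phi> - {x}"

fun params_trm :: "('c, 'a) trm \<Rightarrow> 'a set" where
  "params_trm (Var n) = {}"
| "params_trm (Cst c) = {}"
| "params_trm (Par a) = {a}"

fun params :: "('r, 'c, 'a) fm \<Rightarrow> 'a set" where
  "params (Eq t u) = params_trm t \<union> params_trm u"
| "params (Rel r ts) = (\<Union>t\<in>set ts. params_trm t)"
| "params (Neg \<phi>) = params \<phi>"
| "params (Conj \<phi> \<psi>) = params \<phi> \<union> params \<psi>"
| "params (Ex x \<phi>) = params \<phi>"

definition sentence :: "('r \<Rightarrow> nat) \<Rightarrow> ('r, 'c, 'a) fm \<Rightarrow> bool" where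
  "sentence ar \<phi> \<longleftrightarrow> wf ar \<phi> \<and> fv \<phi> = {} \<and> params \<phi> = {}"

definition models :: "('r, 'c, 'a) struct \<Rightarrow> ('r, 'c, 'a) fm set \<Rightarrow> bool" where
  "models S T \<longleftrightarrow> (\<forall>\<phi>\<in>T. \<forall>e. sat S e \<phi>)"

definition indiscernible ::
  "('r \<Rightarrow> nat) \<Rightarrow> ('r, 'c, 'a) struct \<Rightarrow> 'a set \<Rightarrow> ('i::linorder \<Rightarrow> 'a) \<Rightarrow> bool" where
  "indiscernible ar S A a \<longleftrightarrow>
     (\<forall>(n::nat) (s::nat \<Rightarrow> 'i) (t::nat \<Rightarrow> 'i) (\<phi>::('r, 'c, 'a) fm).
        strict_mono_on {..<n} s \<longrightarrow> strict_mono_on {..<n} t \<longrightarrow>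
        wf ar \<phi> \<longrightarrow> fv \<phi> \<subseteq> {..<n} \<longrightarrow> params \<phi> \<subseteq> A \<longrightarrow>
        (sat S (\<lambda>k. a (s k)) \<phi> \<longleftrightarrow> sat S (\<lambda>k. a (t k)) \<phi>))"

text \<open>Relation symbols of L_sim: those of L1, those of L2 (disjoint by construction),
  and the binary symbols \<sim>1, \<sim>2. Constant symbols of L_sim: pairs (c1, c2).\<close>
datatype ('r1, 'r2) simrel = R1 'r1 | R2 'r2 | Sim1 | Sim2

fun sim_ar :: "('r1 \<Rightarrow> nat) \<Rightarrow> ('r2 \<Rightarrow> nat) \<Rightarrow> ('r1, 'r2) simrel \<Rightarrow> nat" where
  "sim_ar ar1 ar2 (R1 r) = ar1 r"
| "sim_ar ar1 ar2 (R2 r) = ar2 r"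
| "sim_ar ar1 ar2 Sim1 = 2"
| "sim_ar ar1 ar2 Sim2 = 2"

fun sim_rel :: "('r1, 'c1, 'a1) struct \<Rightarrow> ('r2, 'c2, 'a2) struct \<Rightarrow>
    ('r1, 'r2) simrel \<Rightarrow> ('a1 \<times> 'a2) list \<Rightarrow> bool" where
  "sim_rel M1 M2 (R1 r) xs = rel M1 r (map fst xs)"
| "sim_rel M1 M2 (R2 r) xs = rel M2 r (map snd xs)"
| "sim_rel M1 M2 Sim1 xs = (length xs = 2 \<and> fst (xs ! 0) = fst (xs ! 1))"
| "sim_rel M1 M2 Sim2 xs = (length xs = 2 \<and> snd (xs ! 0) = snd (xs ! 1))"

definition simple_product :: "('r1, 'c1, 'a1) struct \<Rightarrow> ('r2, 'c2, 'a2) struct \<Rightarrow>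
    (('r1, 'r2) simrel, 'c1 \<times> 'c2, 'a1 \<times> 'a2) struct" where
  "simple_product M1 M2 =
     \<lparr> cst = (\<lambda>(c1, c2). (cst M1 c1, cst M2 c2)), rel = sim_rel M1 M2 \<rparr>"

end

theory Submission
  imports Defs
begin

fun p1 :: "('c1 \<times> 'c2, 'a1 \<times> 'a2) trm \<Rightarrow> ('c1, 'a1) trm" where
  "p1 (Var n) = Var n" | "p1 (Cst c) = Cst (fst c)" | "p1 (Par x) = Par (fst x)"

fun p2 :: "('c1 \<times> 'c2, 'a1 \<times> 'a2) trm \<Rightarrow> ('c2, 'a2) trm" where
  "p2 (Var n) = Var n" | "p2 (Cst c) = Cst (snd c)" | "p2 (Par x) = Par (snd x)"

definition TT :: "('r, 'c, 'a) fm" where "TT = Ex 0 (Eq (Var 0) (Var 0))"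

lemma TT_simps[simp]: "sat S e TT" "wf ar TT" "fv TT = {}" "params TT = {}"
  by (auto simp: TT_def)

definition dconj where
  "dconj D D' = concat (map (\<lambda>(\<alpha>,\<beta>). map (\<lambda>(\<alpha>',\<beta>'). (Conj \<alpha> \<alpha>', Conj \<beta> \<beta>')) D') D)"

fun dneg where
  "dneg [] = [(TT, TT)]"
| "dneg ((\<alpha>,\<beta>) # D) = dconj [(Neg \<alpha>, TT), (TT, Neg \<beta>)] (dneg D)"

fun dec :: "(('r1, 'r2) simrel, 'c1 \<times> 'c2, 'a1 \<times> 'a2) fm \<Rightarrow>
   (('r1, 'c1, 'a1) fm \<times> ('r2, 'c2, 'a2) fm) list" where
  "dec (Eq t u) = [(Eq (p1 t) (p1 u), Eq (p2 t) (p2 u))]"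
| "dec (Rel (R1 r) ts) = [(Rel r (map p1 ts), TT)]"
| "dec (Rel (R2 r) ts) = [(TT, Rel r (map p2 ts))]"
| "dec (Rel Sim1 ts) = [(Eq (p1 (ts!0)) (p1 (ts!1)), TT)]"
| "dec (Rel Sim2 ts) = [(TT, Eq (p2 (ts!0)) (p2 (ts!1)))]"
| "dec (Neg \<phi>) = dneg (dec \<phi>)"
| "dec (Conj \<phi> \<psi>) = dconj (dec \<phi>) (dec \<psi>)"
| "dec (Ex x \<phi>) = map (\<lambda>(\<alpha>,\<beta>). (Ex x \<alpha>, Ex x \<beta>)) (dec \<phi>)"

lemma set_dconj: "set (dconj D D') = {(Conj \<alpha> \<alpha>', Conj \<beta> \<beta>') | \<alpha> \<beta> \<alpha>' \<beta>'. (\<alpha>,\<beta>) \<in> set D \<and> (\<alpha>',\<beta>') \<in> set D'}"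
  unfolding dconj_def by force

definition holds where
  "holds M1 M2 D e1 e2 = (\<exists>(\<alpha>,\<beta>)\<in>set D. sat M1 e1 \<alpha> \<and> sat M2 e2 \<beta>)"

lemma holds_dconj: "holds M1 M2 (dconj D D') e1 e2 = (holds M1 M2 D e1 e2 \<and> holds M1 M2 D' e1 e2)"
  unfolding holds_def dconj_def by fastforce

lemma holds_dneg: "holds M1 M2 (dneg D) e1 e2 = (\<not> holds M1 M2 D e1 e2)"
  by (induction D rule: dneg.induct) (auto simp: holds_dconj, auto simp: holds_def)

definition good where
  "good ar1 ar2 A1 A2 F D = (\<forall>(\<alpha>,\<beta>)\<in>set D. wf ar1 \<alpha> \<and> fv \<alpha> \<subseteq> F \<and> params \<alpha> \<subseteq> A1
       \<and> wf ar2 \<beta> \<and> fv \<beta> \<subseteq> F \<and> params \<beta> \<subseteq> A2)"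

lemma good_dconj: "good ar1 ar2 A1 A2 F D \<Longrightarrow> good ar1 ar2 A1 A2 G D' \<Longrightarrow>
   good ar1 ar2 A1 A2 (F \<union> G) (dconj D D')"
proof -
  assume g1: "good ar1 ar2 A1 A2 F D" and g2: "good ar1 ar2 A1 A2 G D'"
  show ?thesis unfolding good_def
  proof (intro ballI, clarify)
    fix x y assume "(x, y) \<in> set (dconj D D')"
    then obtain \<alpha> \<beta> \<alpha>' \<beta>' where e: "x = Conj \<alpha> \<alpha>'" "y = Conj \<beta> \<beta>'"
      and m: "(\<alpha>,\<beta>) \<in> set D" "(\<alpha>',\<beta>') \<in> set D'" unfolding set_dconj by blast
    have "wf ar1 \<alpha> \<and> fv \<alpha> \<subseteq> F \<and> params \<alpha> \<subseteq> A1 \<and> wf ar2 \<beta> \<and> fv \<beta> \<subseteq> F \<and> params \<beta> \<subseteq> A2"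
      using g1 m(1) unfolding good_def by auto
    moreover have "wf ar1 \<alpha>' \<and> fv \<alpha>' \<subseteq> G \<and> params \<alpha>' \<subseteq> A1 \<and> wf ar2 \<beta>' \<and> fv \<beta>' \<subseteq> G \<and> params \<beta>' \<subseteq> A2"
      using g2 m(2) unfolding good_def by auto
    ultimately show "wf ar1 x \<and> fv x \<subseteq> F \<union> G \<and> params x \<subseteq> A1 \<and> wf ar2 y \<and> fv y \<subseteq> F \<union> G \<and> params y \<subseteq> A2"
      using e by auto
  qed
qed

lemma good_dneg: "good ar1 ar2 A1 A2 F D \<Longrightarrow> good ar1 ar2 A1 A2 F (dneg D)"
proof (induction D rule: dneg.induct)
  case 1 then show ?case by (simp add: good_def)
next
  case (2 \<alpha> \<beta> D)
  have "good ar1 ar2 A1 A2 F [(Neg \<alpha>, TT), (TT, Neg \<beta>)]" using 2(2) by (simp add: good_def)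
  moreover have "good ar1 ar2 A1 A2 F D" using 2(2) by (simp add: good_def)
  ultimately have "good ar1 ar2 A1 A2 (F \<union> F) (dconj [(Neg \<alpha>, TT), (TT, Neg \<beta>)] (dneg D))"
    using 2(1) good_dconj by blast
  then show ?case by (simp only: dneg.simps Un_absorb)
qed

lemma eval_p1: "eval_trm M1 (\<lambda>k. fst (e k)) (p1 t) = fst (eval_trm (simple_product M1 M2) e t)"
  by (cases t) (auto simp: simple_product_def split: prod.splits)

lemma eval_p2: "eval_trm M2 (\<lambda>k. snd (e k)) (p2 t) = snd (eval_trm (simple_product M1 M2) e t)"
  by (cases t) (auto simp: simple_product_def split: prod.splits)

lemma map_p1: "map (eval_trm M1 (\<lambda>k. fst (e k))) (map p1 ts) = map fst (map (eval_trm (simple_product M1 M2) e) ts)"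
  by (simp add: eval_p1)

lemma map_p2: "map (eval_trm M2 (\<lambda>k. snd (e k))) (map p2 ts) = map snd (map (eval_trm (simple_product M1 M2) e) ts)"
  by (simp add: eval_p2)

lemma rel_sp: "rel (simple_product M1 M2) = sim_rel M1 M2"
  by (simp add: simple_product_def)

lemma upd_fst: "fst \<circ> e(x := v) = (fst \<circ> e)(x := fst v)" by auto
lemma upd_snd: "snd \<circ> e(x := v) = (snd \<circ> e)(x := snd v)" by auto
lemma upd_fst': "(\<lambda>k. fst ((e(x := v)) k)) = (\<lambda>k. fst (e k))(x := fst v)" by auto
lemma upd_snd': "(\<lambda>k. snd ((e(x := v)) k)) = (\<lambda>k. snd (e k))(x := snd v)" by auto

lemma dec_sem:
  "wf (sim_ar ar1 ar2) \<phi> \<Longrightarrow>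
   sat (simple_product M1 M2) e \<phi> = holds M1 M2 (dec \<phi>) (fst \<circ> e) (snd \<circ> e)"
proof (induction \<phi> arbitrary: e)
  case (Eq t u)
  then show ?case using eval_p1[of M1 e _ M2] eval_p2[of M2 e _ M1]
    by (auto simp: holds_def prod_eq_iff)
next
  case (Rel r ts)
  then show ?case
  proof (cases r)
    case Sim1
    with Rel have "length ts = 2" by simp
    then show ?thesis using Sim1 using eval_p1[of M1 e _ M2] by (auto simp: holds_def rel_sp)
  next
    case Sim2
    with Rel have "length ts = 2" by simp
    then show ?thesis using Sim2 using eval_p2[of M2 e _ M1] by (auto simp: holds_def rel_sp)
  qed (auto simp: holds_def rel_sp map_p1[of M1 e _ M2] map_p2[of M2 e _ M1] simp del: map_map)
next
  case (Neg \<phi>)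
  then show ?case by (simp add: holds_dneg)
next
  case (Conj \<phi> \<psi>)
  then show ?case by (simp add: holds_dconj)
next
  case (Ex x \<phi>)
  have w: "wf (sim_ar ar1 ar2) \<phi>" using Ex.prems by simp
  have "sat (simple_product M1 M2) e (Ex x \<phi>) = (\<exists>v. sat (simple_product M1 M2) (e(x:=v)) \<phi>)"
    by simp
  also have "\<dots> = (\<exists>v. holds M1 M2 (dec \<phi>) (fst \<circ> e(x:=v)) (snd \<circ> e(x:=v)))"
    using Ex.IH[OF w] by (simp only:)
  also have "\<dots> = (\<exists>v. holds M1 M2 (dec \<phi>) ((fst \<circ> e)(x := fst v)) ((snd \<circ> e)(x := snd v)))"
    by (simp only: upd_fst upd_snd)
  also have "\<dots> = (\<exists>v1 v2. holds M1 M2 (dec \<phi>) ((fst \<circ> e)(x := v1)) ((snd \<circ> e)(x := v2)))"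
    by (rule iffI) (blast, metis fst_conv snd_conv)
  also have "\<dots> = holds M1 M2 (dec (Ex x \<phi>)) (fst \<circ> e) (snd \<circ> e)"
    unfolding holds_def by (simp add: split_def) blast
  finally show ?case .
qed

lemma fv_p1: "fv_trm (p1 t) = fv_trm t" by (cases t) auto
lemma fv_p2: "fv_trm (p2 t) = fv_trm t" by (cases t) auto
lemma params_p1: "params_trm (p1 t) = fst ` params_trm t" by (cases t) auto
lemma params_p2: "params_trm (p2 t) = snd ` params_trm t" by (cases t) auto

lemma dec_good:
  "wf (sim_ar ar1 ar2) \<phi> \<Longrightarrow> params \<phi> \<subseteq> A \<Longrightarrow>
   good ar1 ar2 (fst ` A) (snd ` A) (fv \<phi>) (dec \<phi>)"
proof (induction \<phi>)
  case (Eq t u)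
  then show ?case by (auto simp: good_def fv_p1 fv_p2 params_p1 params_p2)
next
  case (Rel r ts)
  then show ?case
  proof (cases r)
    case Sim1
    with Rel have "length ts = 2" by simp
    then have "ts ! 0 \<in> set ts" "ts ! 1 \<in> set ts" by auto
    then have "fv_trm (ts ! 0) \<union> fv_trm (ts ! 1) \<subseteq> fv (Rel r ts)"
      "params_trm (ts ! 0) \<union> params_trm (ts ! 1) \<subseteq> A" using Rel by auto
    then show ?thesis using Sim1 Rel by (auto simp: good_def fv_p1 params_p1 simp del: One_nat_def)
  next
    case Sim2
    with Rel have "length ts = 2" by simp
    then have "ts ! 0 \<in> set ts" "ts ! 1 \<in> set ts" by auto
    then have "fv_trm (ts ! 0) \<union> fv_trm (ts ! 1) \<subseteq> fv (Rel r ts)"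
      "params_trm (ts ! 0) \<union> params_trm (ts ! 1) \<subseteq> A" using Rel by auto
    then show ?thesis using Sim2 Rel by (auto simp: good_def fv_p2 params_p2 simp del: One_nat_def)
  qed (auto simp: good_def fv_p1 fv_p2 params_p1 params_p2)
next
  case (Neg \<phi>)
  then show ?case by (simp add: good_dneg)
next
  case (Conj \<phi> \<psi>)
  have "good ar1 ar2 (fst ` A) (snd ` A) (fv \<phi> \<union> fv \<psi>) (dconj (dec \<phi>) (dec \<psi>))"
    using Conj by (intro good_dconj) simp_all
  then show ?case by simp
next
  case (Ex x \<phi>)
  have g: "good ar1 ar2 (fst ` A) (snd ` A) (fv \<phi>) (dec \<phi>)" using Ex by simp
  show ?case unfolding good_def
  proof (intro ballI, clarify)
    fix \<alpha>' \<beta>' assume "(\<alpha>', \<beta>') \<in> set (dec (Ex x \<phi>))"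
    then obtain \<alpha> \<beta> where m: "(\<alpha>, \<beta>) \<in> set (dec \<phi>)" and e: "\<alpha>' = Ex x \<alpha>" "\<beta>' = Ex x \<beta>" by auto
    have "wf ar1 \<alpha> \<and> fv \<alpha> \<subseteq> fv \<phi> \<and> params \<alpha> \<subseteq> fst ` A \<and> wf ar2 \<beta> \<and> fv \<beta> \<subseteq> fv \<phi> \<and> params \<beta> \<subseteq> snd ` A"
      using g m unfolding good_def by auto
    then show "wf ar1 \<alpha>' \<and> fv \<alpha>' \<subseteq> fv (Ex x \<phi>) \<and> params \<alpha>' \<subseteq> fst ` A \<and> wf ar2 \<beta>' \<and> fv \<beta>' \<subseteq> fv (Ex x \<phi>) \<and> params \<beta>' \<subseteq> snd ` A"
      using e by auto
  qed
qed

fun tr_trm :: "('a1 \<times> 'a2) set \<Rightarrow> ('c1, 'a1) trm \<Rightarrow> ('c1 \<times> 'c2, 'a1 \<times> 'a2) trm" where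
  "tr_trm A (Var n) = Var n"
| "tr_trm A (Cst c) = Cst (c, undefined)"
| "tr_trm A (Par x) = Par (x, SOME y. (x, y) \<in> A)"

fun tr :: "('a1 \<times> 'a2) set \<Rightarrow> ('r1, 'c1, 'a1) fm \<Rightarrow> (('r1, 'r2) simrel, 'c1 \<times> 'c2, 'a1 \<times> 'a2) fm" where
  "tr A (Eq t u) = Rel Sim1 [tr_trm A t, tr_trm A u]"
| "tr A (Rel r ts) = Rel (R1 r) (map (tr_trm A) ts)"
| "tr A (Neg \<phi>) = Neg (tr A \<phi>)"
| "tr A (Conj \<phi> \<psi>) = Conj (tr A \<phi>) (tr A \<psi>)"
| "tr A (Ex x \<phi>) = Ex x (tr A \<phi>)"

lemma eval_tr: "fst (eval_trm (simple_product M1 M2) e (tr_trm A t)) = eval_trm M1 (\<lambda>k. fst (e k)) t"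
  by (cases t) (auto simp: simple_product_def)

lemma sat_tr: "sat (simple_product M1 M2) e (tr A \<phi>) = sat M1 (fst \<circ> e) \<phi>"
proof (induction \<phi> arbitrary: e)
  case (Rel r ts)
  have "map fst (map (eval_trm (simple_product M1 M2) e) (map (tr_trm A) ts)) = map (eval_trm M1 (\<lambda>k. fst (e k))) ts"
    by (simp add: eval_tr)
  then show ?case by (simp add: rel_sp comp_def del: map_map)
next
  case (Ex x \<phi>)
  show ?case
  proof
    assume "sat (simple_product M1 M2) e (tr A (Ex x \<phi>))"
    then obtain v where v: "sat (simple_product M1 M2) (e(x:=v)) (tr A \<phi>)" by auto
    have "sat M1 ((fst \<circ> e)(x := fst v)) \<phi>" using Ex.IH[of "e(x:=v)"] v unfolding upd_fst by (simp only:)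
    then show "sat M1 (fst \<circ> e) (Ex x \<phi>)" unfolding sat.simps by blast
  next
    assume "sat M1 (fst \<circ> e) (Ex x \<phi>)"
    then obtain v where "sat M1 ((fst \<circ> e)(x := v)) \<phi>" by auto
    then have "sat M1 (fst \<circ> e(x := (v, undefined))) \<phi>" by (simp add: upd_fst)
    then have "sat (simple_product M1 M2) (e(x := (v, undefined))) (tr A \<phi>)" using Ex.IH[of "e(x := (v, undefined))"] by (simp only:)
    then show "sat (simple_product M1 M2) e (tr A (Ex x \<phi>))" unfolding tr.simps sat.simps by blast
  qed
qed (auto simp: eval_tr rel_sp comp_def)

lemma fv_tr: "fv_trm (tr_trm A t) = fv_trm t" by (cases t) auto

lemma params_tr: "params_trm t \<subseteq> fst ` A \<Longrightarrow> params_trm (tr_trm A t) \<subseteq> A"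
proof (cases t)
  case (Par x)
  assume "params_trm t \<subseteq> fst ` A"
  then have "\<exists>y. (x, y) \<in> A" using Par by force
  then show ?thesis using Par by (auto intro: someI_ex)
qed auto

lemma tr_syn: "wf ar1 \<phi> \<Longrightarrow> params \<phi> \<subseteq> fst ` A \<Longrightarrow>
  wf (sim_ar ar1 ar2) (tr A \<phi>) \<and> fv (tr A \<phi>) = fv \<phi> \<and> params (tr A \<phi>) \<subseteq> A"
proof (induction \<phi>)
  case (Eq t u)
  then show ?case using params_tr[of t A] params_tr[of u A] by (auto simp: fv_tr)
next
  case (Rel r ts)
  then show ?case using params_tr[of _ A] by (fastforce simp: fv_tr)
qed auto

fun tr2_trm :: "('a1 \<times> 'a2) set \<Rightarrow> ('c2, 'a2) trm \<Rightarrow> ('c1 \<times> 'c2, 'a1 \<times> 'a2) trm" where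
  "tr2_trm A (Var n) = Var n"
| "tr2_trm A (Cst c) = Cst (undefined, c)"
| "tr2_trm A (Par x) = Par (SOME y. (y, x) \<in> A, x)"

fun tr2 :: "('a1 \<times> 'a2) set \<Rightarrow> ('r2, 'c2, 'a2) fm \<Rightarrow> (('r1, 'r2) simrel, 'c1 \<times> 'c2, 'a1 \<times> 'a2) fm" where
  "tr2 A (Eq t u) = Rel Sim2 [tr2_trm A t, tr2_trm A u]"
| "tr2 A (Rel r ts) = Rel (R2 r) (map (tr2_trm A) ts)"
| "tr2 A (Neg \<phi>) = Neg (tr2 A \<phi>)"
| "tr2 A (Conj \<phi> \<psi>) = Conj (tr2 A \<phi>) (tr2 A \<psi>)"
| "tr2 A (Ex x \<phi>) = Ex x (tr2 A \<phi>)"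

lemma eval_tr2: "snd (eval_trm (simple_product M1 M2) e (tr2_trm A t)) = eval_trm M2 (\<lambda>k. snd (e k)) t"
  by (cases t) (auto simp: simple_product_def)

lemma sat_tr2: "sat (simple_product M1 M2) e (tr2 A \<phi>) = sat M2 (snd \<circ> e) \<phi>"
proof (induction \<phi> arbitrary: e)
  case (Rel r ts)
  have "map snd (map (eval_trm (simple_product M1 M2) e) (map (tr2_trm A) ts)) = map (eval_trm M2 (\<lambda>k. snd (e k))) ts"
    by (simp add: eval_tr2)
  then show ?case by (simp add: rel_sp comp_def del: map_map)
next
  case (Ex x \<phi>)
  show ?case
  proof
    assume "sat (simple_product M1 M2) e (tr2 A (Ex x \<phi>))"
    then obtain v where v: "sat (simple_product M1 M2) (e(x:=v)) (tr2 A \<phi>)" by auto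
    have "sat M2 ((snd \<circ> e)(x := snd v)) \<phi>" using Ex.IH[of "e(x:=v)"] v unfolding upd_snd by (simp only:)
    then show "sat M2 (snd \<circ> e) (Ex x \<phi>)" unfolding sat.simps by blast
  next
    assume "sat M2 (snd \<circ> e) (Ex x \<phi>)"
    then obtain v where "sat M2 ((snd \<circ> e)(x := v)) \<phi>" by auto
    then have "sat M2 (snd \<circ> e(x := (undefined, v))) \<phi>" by (simp add: upd_snd)
    then have "sat (simple_product M1 M2) (e(x := (undefined, v))) (tr2 A \<phi>)" using Ex.IH[of "e(x := (undefined, v))"] by (simp only:)
    then show "sat (simple_product M1 M2) e (tr2 A (Ex x \<phi>))" unfolding tr2.simps sat.simps by blast
  qed
qed (auto simp: eval_tr2 rel_sp comp_def)

lemma fv_tr2: "fv_trm (tr2_trm A t) = fv_trm t" by (cases t) auto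

lemma params_tr2: "params_trm t \<subseteq> snd ` A \<Longrightarrow> params_trm (tr2_trm A t) \<subseteq> A"
proof (cases t)
  case (Par x)
  assume "params_trm t \<subseteq> snd ` A"
  then have "\<exists>y. (y, x) \<in> A" using Par by force
  then show ?thesis using Par by (auto intro: someI_ex)
qed auto

lemma tr2_syn: "wf ar2 \<phi> \<Longrightarrow> params \<phi> \<subseteq> snd ` A \<Longrightarrow>
  wf (sim_ar ar1 ar2) (tr2 A \<phi>) \<and> fv (tr2 A \<phi>) = fv \<phi> \<and> params (tr2 A \<phi>) \<subseteq> A"
proof (induction \<phi>)
  case (Eq t u)
  then show ?case using params_tr2[of t A] params_tr2[of u A] by (auto simp: fv_tr2)
next
  case (Rel r ts)
  then show ?case using params_tr2[of _ A] by (fastforce simp: fv_tr2)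
qed auto

lemma indiscD: "indiscernible ar S A a \<Longrightarrow> strict_mono_on {..<n} s \<Longrightarrow> strict_mono_on {..<n} t
  \<Longrightarrow> wf ar \<phi> \<Longrightarrow> fv \<phi> \<subseteq> {..<n} \<Longrightarrow> params \<phi> \<subseteq> A
  \<Longrightarrow> sat S (\<lambda>k. a (s k)) \<phi> = sat S (\<lambda>k. a (t k)) \<phi>"
  unfolding indiscernible_def by blast

theorem lemma3p4:
  fixes ar1 :: "'r1 \<Rightarrow> nat" and ar2 :: "'r2 \<Rightarrow> nat"
    and T1 :: "('r1, 'c1, 'a1) fm set" and T2 :: "('r2, 'c2, 'a2) fm set"
    and M1 :: "('r1, 'c1, 'a1) struct" and M2 :: "('r2, 'c2, 'a2) struct"
    and A :: "('a1 \<times> 'a2) set"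
    and a :: "'i::linorder \<Rightarrow> 'a1" and b :: "'i \<Rightarrow> 'a2"
  assumes "\<forall>\<sigma>\<in>T1. sentence ar1 \<sigma>" and "\<forall>\<sigma>\<in>T2. sentence ar2 \<sigma>"
    and "models M1 T1" and "models M2 T2"
  shows "indiscernible (sim_ar ar1 ar2) (simple_product M1 M2) A (\<lambda>i. (a i, b i))
     \<longleftrightarrow> indiscernible ar1 M1 (fst ` A) a \<and> indiscernible ar2 M2 (snd ` A) b"
proof
  assume H: "indiscernible (sim_ar ar1 ar2) (simple_product M1 M2) A (\<lambda>i. (a i, b i))"
  show "indiscernible ar1 M1 (fst ` A) a \<and> indiscernible ar2 M2 (snd ` A) b"
  proof
    show "indiscernible ar1 M1 (fst ` A) a"
      unfolding indiscernible_def
    proof (intro allI impI)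
      fix n :: nat and s t :: "nat \<Rightarrow> 'i" and \<phi> :: "('r1, 'c1, 'a1) fm"
      assume s: "strict_mono_on {..<n} s" and t: "strict_mono_on {..<n} t" and w: "wf ar1 \<phi>"
        and f: "fv \<phi> \<subseteq> {..<n}" and p: "params \<phi> \<subseteq> fst ` A"
      have syn: "wf (sim_ar ar1 ar2) (tr A \<phi> :: (('r1, 'r2) simrel, 'c1 \<times> 'c2, 'a1 \<times> 'a2) fm)
         \<and> fv (tr A \<phi> :: (('r1, 'r2) simrel, 'c1 \<times> 'c2, 'a1 \<times> 'a2) fm) = fv \<phi>
         \<and> params (tr A \<phi> :: (('r1, 'r2) simrel, 'c1 \<times> 'c2, 'a1 \<times> 'a2) fm) \<subseteq> A"
        using tr_syn[OF w p] by blast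
      from syn have w': "wf (sim_ar ar1 ar2) (tr A \<phi> :: (('r1, 'r2) simrel, 'c1 \<times> 'c2, 'a1 \<times> 'a2) fm)"
        and f': "fv (tr A \<phi> :: (('r1, 'r2) simrel, 'c1 \<times> 'c2, 'a1 \<times> 'a2) fm) \<subseteq> {..<n}"
        and p': "params (tr A \<phi> :: (('r1, 'r2) simrel, 'c1 \<times> 'c2, 'a1 \<times> 'a2) fm) \<subseteq> A"
        using f by auto
      have "sat (simple_product M1 M2) (\<lambda>k. (a (s k), b (s k))) (tr A \<phi>) \<longleftrightarrow>
            sat (simple_product M1 M2) (\<lambda>k. (a (t k), b (t k))) (tr A \<phi>)"
        by (rule indiscD[OF H s t w' f' p'])
      then show "sat M1 (\<lambda>k. a (s k)) \<phi> = sat M1 (\<lambda>k. a (t k)) \<phi>"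
        by (simp add: sat_tr comp_def)
    qed
  next
    show "indiscernible ar2 M2 (snd ` A) b"
      unfolding indiscernible_def
    proof (intro allI impI)
      fix n :: nat and s t :: "nat \<Rightarrow> 'i" and \<phi> :: "('r2, 'c2, 'a2) fm"
      assume s: "strict_mono_on {..<n} s" and t: "strict_mono_on {..<n} t" and w: "wf ar2 \<phi>"
        and f: "fv \<phi> \<subseteq> {..<n}" and p: "params \<phi> \<subseteq> snd ` A"
      have syn: "wf (sim_ar ar1 ar2) (tr2 A \<phi> :: (('r1, 'r2) simrel, 'c1 \<times> 'c2, 'a1 \<times> 'a2) fm)
         \<and> fv (tr2 A \<phi> :: (('r1, 'r2) simrel, 'c1 \<times> 'c2, 'a1 \<times> 'a2) fm) = fv \<phi>
         \<and> params (tr2 A \<phi> :: (('r1, 'r2) simrel, 'c1 \<times> 'c2, 'a1 \<times> 'a2) fm) \<subseteq> A"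
        using tr2_syn[OF w p] by blast
      from syn have w': "wf (sim_ar ar1 ar2) (tr2 A \<phi> :: (('r1, 'r2) simrel, 'c1 \<times> 'c2, 'a1 \<times> 'a2) fm)"
        and f': "fv (tr2 A \<phi> :: (('r1, 'r2) simrel, 'c1 \<times> 'c2, 'a1 \<times> 'a2) fm) \<subseteq> {..<n}"
        and p': "params (tr2 A \<phi> :: (('r1, 'r2) simrel, 'c1 \<times> 'c2, 'a1 \<times> 'a2) fm) \<subseteq> A"
        using f by auto
      have "sat (simple_product M1 M2) (\<lambda>k. (a (s k), b (s k))) (tr2 A \<phi>) \<longleftrightarrow>
            sat (simple_product M1 M2) (\<lambda>k. (a (t k), b (t k))) (tr2 A \<phi>)"
        by (rule indiscD[OF H s t w' f' p'])
      then show "sat M2 (\<lambda>k. b (s k)) \<phi> = sat M2 (\<lambda>k. b (t k)) \<phi>"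
        by (simp add: sat_tr2 comp_def)
    qed
  qed
next
  assume "indiscernible ar1 M1 (fst ` A) a \<and> indiscernible ar2 M2 (snd ` A) b"
  then have H1: "indiscernible ar1 M1 (fst ` A) a" and H2: "indiscernible ar2 M2 (snd ` A) b" by auto
  show "indiscernible (sim_ar ar1 ar2) (simple_product M1 M2) A (\<lambda>i. (a i, b i))"
    unfolding indiscernible_def
  proof (intro allI impI)
    fix n :: nat and s t :: "nat \<Rightarrow> 'i" and \<phi> :: "(('r1, 'r2) simrel, 'c1 \<times> 'c2, 'a1 \<times> 'a2) fm"
    assume s: "strict_mono_on {..<n} s" and t: "strict_mono_on {..<n} t"
      and w: "wf (sim_ar ar1 ar2) \<phi>" and f: "fv \<phi> \<subseteq> {..<n}" and p: "params \<phi> \<subseteq> A"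
    have g: "good ar1 ar2 (fst ` A) (snd ` A) (fv \<phi>) (dec \<phi>)" using dec_good[OF w p] .
    have eq: "holds M1 M2 (dec \<phi>) (\<lambda>k. a (s k)) (\<lambda>k. b (s k)) =
              holds M1 M2 (dec \<phi>) (\<lambda>k. a (t k)) (\<lambda>k. b (t k))"
      unfolding holds_def
    proof (intro bex_cong refl, clarify)
      fix \<alpha> \<beta> assume "(\<alpha>, \<beta>) \<in> set (dec \<phi>)"
      then have "wf ar1 \<alpha> \<and> fv \<alpha> \<subseteq> {..<n} \<and> params \<alpha> \<subseteq> fst ` A
         \<and> wf ar2 \<beta> \<and> fv \<beta> \<subseteq> {..<n} \<and> params \<beta> \<subseteq> snd ` A"
        using g f unfolding good_def by fastforce
      then have w1: "wf ar1 \<alpha>" and f1: "fv \<alpha> \<subseteq> {..<n}" and p1: "params \<alpha> \<subseteq> fst ` A"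
        and w2: "wf ar2 \<beta>" and f2: "fv \<beta> \<subseteq> {..<n}" and p2: "params \<beta> \<subseteq> snd ` A" by auto
      have "sat M1 (\<lambda>k. a (s k)) \<alpha> = sat M1 (\<lambda>k. a (t k)) \<alpha>"
        by (rule indiscD[OF H1 s t w1 f1 p1])
      moreover have "sat M2 (\<lambda>k. b (s k)) \<beta> = sat M2 (\<lambda>k. b (t k)) \<beta>"
        by (rule indiscD[OF H2 s t w2 f2 p2])
      ultimately show "(sat M1 (\<lambda>k. a (s k)) \<alpha> \<and> sat M2 (\<lambda>k. b (s k)) \<beta>) =
                 (sat M1 (\<lambda>k. a (t k)) \<alpha> \<and> sat M2 (\<lambda>k. b (t k)) \<beta>)" by simp
    qed
    show "sat (simple_product M1 M2) (\<lambda>k. (a (s k), b (s k))) \<phi> =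
          sat (simple_product M1 M2) (\<lambda>k. (a (t k), b (t k))) \<phi>"
      using eq by (simp add: dec_sem[OF w] comp_def)
  qed
qed

end
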